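(* Let $M\ge 1$ be an integer (the number of end-to-end spatial subchannels, $M=KN$), let $\mathcal{P}_{\rm S}>0$ and $\mathcal{P}_{\rm R}>0$ be the total transmit powers available at the source and at the relay, and let $g_{1,1},\dots,g_{1,M}>0$ and $g_{2,1},\dots,g_{2,M}>0$ be the noise-normalized channel gains of the subchannels over hop 1 and hop 2, respectively (i.e. $g_{1,n}=\lambda_{1,n}/\sigma_{\rm R}^2$, $g_{2,n'}=\lambda_{2,n'}/\sigma_{\rm D}^2$). Let $c>0$ be a constant. Consider the problem $$\max_{\theta,\mu,\overline{\mu}}\ \sum_{n=1}^{M}\sum_{n'=1}^{M}\theta_{n,n'}\, c\,\min\Big(\log_2\big(1+\mathcal{P}_{\rm S}\mu_n g_{1,n}\big),\ \log_2\big(1+\mathcal{P}_{\rm R}\overline{\mu}_{n'} g_{2,n'}\big)\Big)$$ subject to $\sum_{n=1}^M\mu_n\le 1$, $\sum_{n'=1}^M\overline{\mu}_{n'}\le 1$, $\mu_n\ge 0$, $\overline{\mu}_{n'}\ge0$, $\theta_{n,n'}\in\{0,1\}$, $\sum_{n=1}^M\theta_{n,n'}=1$ for every $n'$ and $\sum_{n'=1}^M\theta_{n,n'}=1$ for every $n$. Then the optimal subchannel pairing is the sorted pairing: there is an optimal solution in which, for each $i=1,\dots,M$, the hop-1 subchannel with the $i$-th largest gain $g_{1,n}$ is paired (i.e. $\theta_{n,n'}=1$) with the hop-2 subchannel with the $i$-th largest gain $g_{2,n'}$.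
   Context: Setting: a half-duplex two-hop decode-and-forward MIMO-OFDM relaying system (source S, energy-harvesting relay R, destination D) where, after SVD precoding/filtering, each hop is decomposed into $M=KN$ parallel independent subchannels ($K$ OFDM subcarriers, $N=\min\{N_{\rm S},N_{\rm R},N_{\rm D}\}$ spatial subchannels per subcarrier), with $\lambda_{i,n}$ the squared nonzero singular values of the hop-$i$ channel matrices and $\sigma_{\rm R}^2,\sigma_{\rm D}^2$ the noise powers at R and D. The variable $\theta_{n,n'}=1$ means hop-1 subchannel $n$ is paired with hop-2 subchannel $n'$; $\mu_n$ and $\overline{\mu}_{n'}$ are power allocation fractions at S and R. The rate of a pair is the minimum of the two hop rates, and $c=\frac{(1-\alpha)\mathfrak{B}}{2K}$ for a fixed time-switching factor $\alpha\in[0,1)$ and bandwidth $\mathfrak{B}$. *)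

theory Defs
  imports Complex_Main
begin

text \<open>Subchannels are indexed by 1..M. theta, mu, mub are functions on indices;
  only their values on 1..M matter.\<close>

definition pair_rate :: "real \<Rightarrow> real \<Rightarrow> real \<Rightarrow> real \<Rightarrow> real \<Rightarrow> real \<Rightarrow> real \<Rightarrow> real" where
  "pair_rate c PS PR g1n g2n' mun mubn' =
     c * min (log 2 (1 + PS * mun * g1n)) (log 2 (1 + PR * mubn' * g2n'))"

definition objective ::
  "nat \<Rightarrow> real \<Rightarrow> real \<Rightarrow> real \<Rightarrow> (nat \<Rightarrow> real) \<Rightarrow> (nat \<Rightarrow> real)
   \<Rightarrow> (nat \<Rightarrow> nat \<Rightarrow> real) \<Rightarrow> (nat \<Rightarrow> real) \<Rightarrow> (nat \<Rightarrow> real) \<Rightarrow> real" where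
  "objective M c PS PR g1 g2 \<theta> \<mu> \<mu>b =
     (\<Sum>n=1..M. \<Sum>n'=1..M. \<theta> n n' * pair_rate c PS PR (g1 n) (g2 n') (\<mu> n) (\<mu>b n'))"

definition feasible :: "nat \<Rightarrow> (nat \<Rightarrow> nat \<Rightarrow> real) \<Rightarrow> (nat \<Rightarrow> real) \<Rightarrow> (nat \<Rightarrow> real) \<Rightarrow> bool" where
  "feasible M \<theta> \<mu> \<mu>b \<longleftrightarrow>
     (\<Sum>n=1..M. \<mu> n) \<le> 1 \<and> (\<Sum>n'=1..M. \<mu>b n') \<le> 1 \<and>
     (\<forall>n\<in>{1..M}. \<mu> n \<ge> 0) \<and> (\<forall>n'\<in>{1..M}. \<mu>b n' \<ge> 0) \<and>
     (\<forall>n\<in>{1..M}. \<forall>n'\<in>{1..M}. \<theta> n n' \<in> {0, 1}) \<and>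
     (\<forall>n'\<in>{1..M}. (\<Sum>n=1..M. \<theta> n n') = 1) \<and>
     (\<forall>n\<in>{1..M}. (\<Sum>n'=1..M. \<theta> n n') = 1)"

definition optimal ::
  "nat \<Rightarrow> real \<Rightarrow> real \<Rightarrow> real \<Rightarrow> (nat \<Rightarrow> real) \<Rightarrow> (nat \<Rightarrow> real)
   \<Rightarrow> (nat \<Rightarrow> nat \<Rightarrow> real) \<Rightarrow> (nat \<Rightarrow> real) \<Rightarrow> (nat \<Rightarrow> real) \<Rightarrow> bool" where
  "optimal M c PS PR g1 g2 \<theta> \<mu> \<mu>b \<longleftrightarrow>
     feasible M \<theta> \<mu> \<mu>b \<and>
     (\<forall>\<theta>' \<mu>' \<mu>b'. feasible M \<theta>' \<mu>' \<mu>b' \<longrightarrow>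
        objective M c PS PR g1 g2 \<theta>' \<mu>' \<mu>b' \<le> objective M c PS PR g1 g2 \<theta> \<mu> \<mu>b)"

definition decreasing_ranking :: "nat \<Rightarrow> (nat \<Rightarrow> real) \<Rightarrow> (nat \<Rightarrow> nat) \<Rightarrow> bool" where
  "decreasing_ranking M g \<sigma> \<longleftrightarrow>
     bij_betw \<sigma> {1..M} {1..M} \<and>
     (\<forall>i\<in>{1..M}. \<forall>j\<in>{1..M}. i \<le> j \<longrightarrow> g (\<sigma> j) \<le> g (\<sigma> i))"

definition sorted_pairing :: "nat \<Rightarrow> (nat \<Rightarrow> real) \<Rightarrow> (nat \<Rightarrow> real) \<Rightarrow> (nat \<Rightarrow> nat \<Rightarrow> real) \<Rightarrow> bool" where
  "sorted_pairing M g1 g2 \<theta> \<longleftrightarrow>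
     (\<exists>\<sigma>1 \<sigma>2. decreasing_ranking M g1 \<sigma>1 \<and> decreasing_ranking M g2 \<sigma>2 \<and>
        (\<forall>i\<in>{1..M}. \<theta> (\<sigma>1 i) (\<sigma>2 i) = 1))"

end

theory Submission imports Defs "HOL-Analysis.Analysis" begin


definition Sb :: "nat \<Rightarrow> (nat \<Rightarrow> real) set" where
  "Sb M = PiE UNIV (\<lambda>n. if n \<in> {1..M} then {0..1::real} else {0}) \<inter> {\<mu>. (\<Sum>n=1..M. \<mu> n) \<le> 1}"

lemma Sb_iff: "\<mu> \<in> Sb M \<longleftrightarrow> (\<forall>n\<in>{1..M}. 0 \<le> \<mu> n \<and> \<mu> n \<le> 1) \<and> (\<forall>n. n \<notin> {1..M} \<longrightarrow> \<mu> n = 0) \<and> (\<Sum>n=1..M. \<mu> n) \<le> 1"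
  unfolding Sb_def PiE_UNIV_domain Pi_iff
  by (auto split: if_splits)

lemma compact_Sb: "compact (Sb M)"
proof -
  have "compactin (product_topology (\<lambda>_. euclidean) UNIV) (PiE UNIV (\<lambda>n. if n \<in> {1..M} then {0..1::real} else {0}))"
    by (subst compactin_PiE) auto
  hence c1: "compact (PiE UNIV (\<lambda>n. if n \<in> {1..M} then {0..1::real} else {0}))"
    by (simp add: euclidean_product_topology)
  have "continuous_on UNIV (\<lambda>\<mu>::nat\<Rightarrow>real. \<Sum>n=1..M. \<mu> n)"
    by (intro continuous_intros) simp
  hence "closed {\<mu>::nat\<Rightarrow>real. (\<Sum>n=1..M. \<mu> n) \<le> 1}"
    using closed_Collect_le[of "\<lambda>\<mu>. \<Sum>n=1..M. \<mu> n" "\<lambda>_. 1"] by simp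
  then show ?thesis unfolding Sb_def using c1 by (simp add: compact_Int_closed)
qed

lemma cont_obj: assumes "PS > 0" "PR > 0" "\<forall>n\<in>{1..M}. g1 n > 0" "\<forall>n\<in>{1..M}. g2 n > 0"
  shows "continuous_on (Sb M \<times> Sb M) (\<lambda>p. objective M c PS PR g1 g2 \<theta> (fst p) (snd p))"
  unfolding objective_def pair_rate_def
proof (intro continuous_intros ballI)
  fix n n' p assume "n \<in> {1..M}" "n' \<in> {1..M}" "p \<in> Sb M \<times> Sb M"
  then have h: "0 \<le> fst p n" "0 \<le> snd p n'" "0 < g1 n" "0 < g2 n'" using assms by (auto simp: Sb_iff)
  show "1 + PS * fst p n * g1 n \<noteq> 0" "1 + PR * snd p n' * g2 n' \<noteq> 0"
  proof -
    have "0 \<le> PS * fst p n * g1 n" "0 \<le> PR * snd p n' * g2 n'" using h assms(1,2) by simp_all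
    then show "1 + PS * fst p n * g1 n \<noteq> 0" "1 + PR * snd p n' * g2 n' \<noteq> 0" by linarith+
  qed
next
  fix n
  show "continuous_on (Sb M \<times> Sb M) (\<lambda>x. fst x n)"
    by (rule continuous_on_compose2[OF continuous_on_product_coordinates continuous_on_fst[OF continuous_on_id]]) auto
  show "continuous_on (Sb M \<times> Sb M) (\<lambda>x. snd x n)"
    by (rule continuous_on_compose2[OF continuous_on_product_coordinates continuous_on_snd[OF continuous_on_id]]) auto
qed auto



lemma ranking_exists: "\<exists>\<sigma>. decreasing_ranking M g \<sigma>"
proof -
  define xs where "xs = sort_key (\<lambda>n. - g n) [1..<M+1]"
  have len: "length xs = M" by (simp add: xs_def)
  have dist: "distinct xs" by (simp add: xs_def)
  have set: "set xs = {1..M}" by (auto simp: xs_def)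
  have srt: "sorted (map (\<lambda>n. - g n) xs)" by (simp add: xs_def)
  define \<sigma> where "\<sigma> i = xs ! (i - 1)" for i
  have inj: "inj_on \<sigma> {1..M}"
  proof (rule inj_onI)
    fix i j assume "i \<in> {1..M}" "j \<in> {1..M}" "\<sigma> i = \<sigma> j"
    then have "xs ! (i - 1) = xs ! (j - 1)" by (simp add: \<sigma>_def)
    then have "i - 1 = j - 1" using nth_eq_iff_index_eq[OF dist, of "i - 1" "j - 1"] len \<open>i \<in> {1..M}\<close> \<open>j \<in> {1..M}\<close> by auto
    then show "i = j" using \<open>i \<in> {1..M}\<close> \<open>j \<in> {1..M}\<close> by auto
  qed
  have im: "\<sigma> ` {1..M} \<subseteq> {1..M}"
  proof
    fix y assume "y \<in> \<sigma> ` {1..M}"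
    then obtain i where "i \<in> {1..M}" "y = xs ! (i - 1)" by (auto simp: \<sigma>_def)
    then have "y \<in> set xs" using len by auto
    then show "y \<in> {1..M}" using set by simp
  qed
  have "bij_betw \<sigma> {1..M} {1..M}"
    unfolding bij_betw_def using inj im endo_inj_surj[OF _ im inj] by simp
  moreover have "\<forall>i\<in>{1..M}. \<forall>j\<in>{1..M}. i \<le> j \<longrightarrow> g (\<sigma> j) \<le> g (\<sigma> i)"
  proof (intro ballI impI)
    fix i j assume ij: "i \<in> {1..M}" "j \<in> {1..M}" "i \<le> j"
    have "map (\<lambda>n. - g n) xs ! (i - 1) \<le> map (\<lambda>n. - g n) xs ! (j - 1)"
      using ij len by (intro sorted_nth_mono[OF srt]) auto
    then show "g (\<sigma> j) \<le> g (\<sigma> i)" using ij len by (simp add: \<sigma>_def)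
  qed
  ultimately show ?thesis unfolding decreasing_ranking_def by blast
qed



lemma rearr:
  fixes x y :: "nat \<Rightarrow> real"
  assumes "\<forall>i\<in>{1..n}. \<forall>j\<in>{1..n}. i \<le> j \<longrightarrow> x j \<le> x i \<and> y i \<le> y j"
    and "bij_betw f {1..n} {1..n}"
  shows "(\<Sum>i=1..n. x i * y i) \<le> (\<Sum>i=1..n. x i * y (f i))"
  using assms
proof (induction n arbitrary: f)
  case 0
  then show ?case by simp
next
  case (Suc n)
  let ?N = "Suc n"
  let ?A = "{1..Suc n}"
  have fA: "f ` ?A = ?A" and finj: "inj_on f ?A" using Suc.prems(2) by (auto simp: bij_betw_def)
  have NA: "?N \<in> ?A" by simp
  then have "?N \<in> f ` ?A" using fA by simp
  then obtain j where j: "j \<in> ?A" "f j = ?N" by (metis imageE)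
  define f' where "f' = f(j := f ?N, ?N := ?N)"
  have f'N: "f' ?N = ?N" by (simp add: f'_def)
  have fN: "f ?N \<in> ?A" using fA NA by blast
  have key: "\<And>a. f' a = (if a = ?N then ?N else if a = j then f ?N else f a)" by (simp add: f'_def)
  have fa: "\<And>a. a \<in> ?A \<Longrightarrow> f a \<in> ?A" using fA by blast
  have ineq: "(\<Sum>i\<in>?A. x i * y (f' i)) \<le> (\<Sum>i\<in>?A. x i * y (f i))"
  proof (cases "j = ?N")
    case True
    then have "f' = f" using j by (auto simp: f'_def)
    then show ?thesis by simp
  next
    case False
    have jA: "j \<in> ?A - {?N}" using j False by simp
    have E: "?A - {?N} - {j} = ?A - {j, ?N}" by blast
    have split: "sum g ?A = g ?N + (g j + sum g (?A - {j, ?N}))" for g :: "nat \<Rightarrow> real"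
    proof -
      have "sum g ?A = g ?N + sum g (?A - {?N})" by (rule sum.remove[OF _ NA]) simp
      also have "sum g (?A - {?N}) = g j + sum g (?A - {?N} - {j})" by (rule sum.remove[OF _ jA]) simp
      finally show ?thesis unfolding E .
    qed
    have rest: "(\<Sum>i\<in>?A - {j, ?N}. x i * y (f' i)) = (\<Sum>i\<in>?A - {j, ?N}. x i * y (f i))"
      by (rule sum.cong) (auto simp: f'_def)
    have "x ?N \<le> x j" "y (f ?N) \<le> y ?N" using Suc.prems(1) j fN by auto
    then have "0 \<le> (x j - x ?N) * (y ?N - y (f ?N))" by simp
    then show ?thesis using rest split[of "\<lambda>i. x i * y (f' i)"] split[of "\<lambda>i. x i * y (f i)"] f'N j False
      by (simp add: key algebra_simps)
  qed
  have f'inj: "inj_on f' ?A"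
  proof (rule inj_onI)
    fix a b assume ab: "a \<in> ?A" "b \<in> ?A" "f' a = f' b"
    have fi: "\<And>u v. u \<in> ?A \<Longrightarrow> v \<in> ?A \<Longrightarrow> f u = f v \<Longrightarrow> u = v" using finj by (simp add: inj_on_def)
    show "a = b"
    proof (cases "a = ?N")
      case aN: True
      show ?thesis
      proof (cases "b = ?N")
        case True then show ?thesis using aN by simp
      next
        case bN: False
        show ?thesis
        proof (cases "b = j")
          case True
          then have "f ?N = f j" using ab(3) aN bN j(2) by (auto simp: key)
          then show ?thesis using fi[OF NA j(1)] True bN by simp
        next
          case False
          then have "f b = f j" using ab(3) aN bN j(2) by (auto simp: key)
          then show ?thesis using fi[OF ab(2) j(1)] False by simp
        qed
      qed
    next
      case aN: False
      show ?thesis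
      proof (cases "b = ?N")
        case bN: True
        show ?thesis
        proof (cases "a = j")
          case True
          then have "f ?N = f j" using ab(3) aN bN j(2) by (auto simp: key)
          then show ?thesis using fi[OF NA j(1)] True aN by simp
        next
          case False
          then have "f a = f j" using ab(3) aN bN j(2) by (auto simp: key)
          then show ?thesis using fi[OF ab(1) j(1)] False by simp
        qed
      next
        case bN: False
        show ?thesis
        proof (cases "a = j")
          case aj: True
          show ?thesis
          proof (cases "b = j")
            case True then show ?thesis using aj by simp
          next
            case False
            then have "f ?N = f b" using ab(3) aN bN aj j(2) by (auto simp: key)
            then show ?thesis using fi[OF NA ab(2)] bN by simp
          qed
        next
          case aj: False
          show ?thesis
          proof (cases "b = j")
            case True
            then have "f a = f ?N" using ab(3) aN bN aj j(2) by (auto simp: key)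
            then show ?thesis using fi[OF ab(1) NA] aN by simp
          next
            case False
            then have "f a = f b" using ab(3) aN bN aj j(2) by (auto simp: key)
            then show ?thesis using fi[OF ab(1) ab(2)] by simp
          qed
        qed
      qed
    qed
  qed
  have f'sub: "f' ` ?A \<subseteq> ?A"
  proof
    fix z assume "z \<in> f' ` ?A"
    then obtain a where a: "a \<in> ?A" "z = f' a" by blast
    show "z \<in> ?A" using a fa[OF a(1)] fN NA by (simp add: key)
  qed
  have f'A: "f' ` ?A = ?A" by (rule endo_inj_surj[OF _ f'sub f'inj]) simp
  have "f' ` {1..n} = f' ` (?A - {?N})" by (simp add: atLeastAtMostSuc_conv)
  also have "\<dots> = f' ` ?A - f' ` {?N}" by (rule inj_on_image_set_diff[OF f'inj]) auto
  also have "\<dots> = {1..n}" using f'A f'N by auto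
  finally have "bij_betw f' {1..n} {1..n}"
    unfolding bij_betw_def using f'inj by (auto intro: inj_on_subset)
  then have IH: "(\<Sum>i=1..n. x i * y i) \<le> (\<Sum>i=1..n. x i * y (f' i))"
    using Suc.IH Suc.prems(1) by auto
  have "(\<Sum>i=1..Suc n. x i * y i) = (\<Sum>i=1..n. x i * y i) + x ?N * y ?N" by simp
  also have "\<dots> \<le> (\<Sum>i=1..n. x i * y (f' i)) + x ?N * y (f' ?N)" using IH f'N by simp
  also have "\<dots> = (\<Sum>i\<in>?A. x i * y (f' i))" by simp
  also have "\<dots> \<le> (\<Sum>i\<in>?A. x i * y (f i))" by (rule ineq)
  finally show ?case .
qed



lemma sum01:
  assumes "finite B" "\<forall>b\<in>B. h b \<in> {0, 1::real}"
  shows "sum h B = real (card {b\<in>B. h b = 1})"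
proof -
  have "sum h B = (\<Sum>b\<in>B. if h b = 1 then 1 else 0)"
    using assms(2) by (intro sum.cong) auto
  also have "\<dots> = sum (\<lambda>_. 1) {b\<in>B. h b = 1}"
    using sum.inter_filter[OF assms(1), of "\<lambda>_. 1::real" "\<lambda>b. h b = 1"] by simp
  also have "\<dots> = real (card {b\<in>B. h b = 1})" by simp
  finally show ?thesis .
qed

lemma card1_unique: "card S = 1 \<Longrightarrow> a \<in> S \<Longrightarrow> b \<in> S \<Longrightarrow> a = b"
  by (metis card_1_singletonE singletonD)

lemma perm_of_theta:
  assumes fin: "finite A" and v: "\<forall>n\<in>A. \<forall>n'\<in>A. \<theta> n n' \<in> {0, 1::real}"
    and col: "\<forall>n'\<in>A. (\<Sum>n\<in>A. \<theta> n n') = 1" and row: "\<forall>n\<in>A. (\<Sum>n'\<in>A. \<theta> n n') = 1"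
  shows "\<exists>\<pi>. bij_betw \<pi> A A \<and> (\<forall>n\<in>A. \<forall>n'\<in>A. \<theta> n n' = (if n' = \<pi> n then 1 else 0))"
proof -
  have rc: "card {n'\<in>A. \<theta> n n' = 1} = 1" if "n \<in> A" for n
    using sum01[OF fin, of "\<theta> n"] row v that by auto
  have cc: "card {n\<in>A. \<theta> n n' = 1} = 1" if "n' \<in> A" for n'
    using sum01[OF fin, of "\<lambda>n. \<theta> n n'"] col v that by auto
  define \<pi> where "\<pi> n = (SOME n'. n' \<in> A \<and> \<theta> n n' = 1)" for n
  have \<pi>1: "\<pi> n \<in> A \<and> \<theta> n (\<pi> n) = 1" if nA: "n \<in> A" for n
  proof -
    obtain z where "{n'\<in>A. \<theta> n n' = 1} = {z}" using rc[OF nA] by (rule card_1_singletonE)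
    then have "\<exists>n'. n' \<in> A \<and> \<theta> n n' = 1" by blast
    then show ?thesis unfolding \<pi>_def by (rule someI_ex)
  qed
  have eq: "\<theta> n n' = (if n' = \<pi> n then 1 else 0)" if "n \<in> A" "n' \<in> A" for n n'
  proof (cases "\<theta> n n' = 1")
    case True
    then have "n' = \<pi> n" using card1_unique[OF rc[OF that(1)], of n' "\<pi> n"] \<pi>1[OF that(1)] that by auto
    then show ?thesis using True by simp
  next
    case False
    then have "\<theta> n n' = 0" using v that by auto
    moreover have "n' \<noteq> \<pi> n" using False \<pi>1[OF that(1)] by auto
    ultimately show ?thesis by simp
  qed
  have inj: "inj_on \<pi> A"
  proof (rule inj_onI)
    fix a b assume ab: "a \<in> A" "b \<in> A" "\<pi> a = \<pi> b"
    have "a \<in> {n\<in>A. \<theta> n (\<pi> b) = 1}" "b \<in> {n\<in>A. \<theta> n (\<pi> b) = 1}" using \<pi>1[OF ab(1)] \<pi>1[OF ab(2)] ab by auto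
    then show "a = b" using card1_unique[OF cc] \<pi>1[OF ab(2)] by blast
  qed
  have sub: "\<pi> ` A \<subseteq> A" using \<pi>1 by auto
  have "bij_betw \<pi> A A" unfolding bij_betw_def using inj endo_inj_surj[OF fin sub inj] by simp
  then show ?thesis using eq by blast
qed

lemma theta_of_perm:
  assumes fin: "finite A" and p: "bij_betw p A A"
  shows "\<forall>n'\<in>A. (\<Sum>n\<in>A. (if n' = p n then 1 else 0::real)) = 1"
    and "\<forall>n\<in>A. (\<Sum>n'\<in>A. (if n' = p n then 1 else 0::real)) = 1"
proof -
  show "\<forall>n'\<in>A. (\<Sum>n\<in>A. (if n' = p n then 1 else 0::real)) = 1"
  proof
    fix n' assume "n' \<in> A"
    have "(\<Sum>n\<in>A. (if n' = p n then 1 else 0::real)) = (\<Sum>m\<in>A. (if n' = m then 1 else 0::real))"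
      by (rule sum.reindex_bij_betw[OF p])
    also have "\<dots> = 1" using \<open>n' \<in> A\<close> fin by simp
    finally show "(\<Sum>n\<in>A. (if n' = p n then 1 else 0::real)) = 1" .
  qed
  show "\<forall>n\<in>A. (\<Sum>n'\<in>A. (if n' = p n then 1 else 0::real)) = 1"
  proof
    fix n assume "n \<in> A"
    then have "p n \<in> A" using p by (auto simp: bij_betw_def)
    then show "(\<Sum>n'\<in>A. (if n' = p n then 1 else 0::real)) = 1" using fin by simp
  qed
qed

lemma obj_perm:
  assumes "\<forall>n\<in>{1..M}. \<forall>n'\<in>{1..M}. \<theta> n n' = (if n' = \<pi> n then 1 else 0)"
    and "\<forall>n\<in>{1..M}. \<pi> n \<in> {1..M}"
  shows "objective M c PS PR g1 g2 \<theta> \<mu> \<mu>b =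
    (\<Sum>n=1..M. pair_rate c PS PR (g1 n) (g2 (\<pi> n)) (\<mu> n) (\<mu>b (\<pi> n)))"
  unfolding objective_def
proof (rule sum.cong[OF refl])
  fix n assume n: "n \<in> {1..M}"
  have "(\<Sum>n'=1..M. \<theta> n n' * pair_rate c PS PR (g1 n) (g2 n') (\<mu> n) (\<mu>b n'))
      = (\<Sum>n'=1..M. if n' = \<pi> n then pair_rate c PS PR (g1 n) (g2 n') (\<mu> n) (\<mu>b n') else 0)"
    using assms(1) n by (intro sum.cong) auto
  also have "\<dots> = pair_rate c PS PR (g1 n) (g2 (\<pi> n)) (\<mu> n) (\<mu>b (\<pi> n))"
    using assms(2) n by (simp add: sum.delta')
  finally show "(\<Sum>n'=1..M. \<theta> n n' * pair_rate c PS PR (g1 n) (g2 n') (\<mu> n) (\<mu>b n'))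
      = pair_rate c PS PR (g1 n) (g2 (\<pi> n)) (\<mu> n) (\<mu>b (\<pi> n))" .
qed

lemma pr_min:
  assumes "0 \<le> a" "0 \<le> b"
  shows "c * min (log 2 (1+a)) (log 2 (1+b)) = c * log 2 (1 + min a b)"
proof (cases "a \<le> b")
  case True
  then have "log 2 (1+a) \<le> log 2 (1+b)" using assms by simp
  then show ?thesis using True by (simp add: min_def)
next
  case False
  then have "log 2 (1+b) \<le> log 2 (1+a)" using assms by simp
  then show ?thesis using False by (simp add: min_def)
qed

lemma hop_bound:
  fixes m g :: "nat \<Rightarrow> real"
  assumes \<sigma>: "decreasing_ranking M g \<sigma>" and \<tau>: "decreasing_ranking M m \<tau>"
    and q: "bij_betw q {1..M} {1..M}"
    and P: "P > 0" and gpos: "\<forall>n\<in>{1..M}. g n > 0"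
  shows "(\<Sum>i=1..M. m (\<tau> i) / (P * g (\<sigma> i))) \<le> (\<Sum>n=1..M. m n / (P * g (q n)))"
proof -
  let ?A = "{1..M}"
  have sb: "bij_betw \<sigma> ?A ?A" and tb: "bij_betw \<tau> ?A ?A" using \<sigma> \<tau> by (auto simp: decreasing_ranking_def)
  define \<iota> where "\<iota> = inv_into ?A \<sigma>"
  have ib: "bij_betw \<iota> ?A ?A" unfolding \<iota>_def by (rule bij_betw_inv_into[OF sb])
  have si: "\<sigma> (\<iota> n) = n" if "n \<in> ?A" for n
    unfolding \<iota>_def using sb that by (simp add: bij_betw_inv_into_right)
  define f where "f = \<iota> \<circ> q \<circ> \<tau>"
  have fb: "bij_betw f ?A ?A" unfolding f_def using bij_betw_trans[OF bij_betw_trans[OF tb q] ib] by (simp add: comp_assoc)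
  have "(\<Sum>i=1..M. m (\<tau> i) * (1/(P*g (\<sigma> i)))) \<le> (\<Sum>i=1..M. m (\<tau> i) * (1/(P*g (\<sigma> (f i)))))"
  proof (rule rearr[of M "\<lambda>i. m (\<tau> i)" "\<lambda>i. 1/(P*g (\<sigma> i))" f, OF _ fb])
    show "\<forall>i\<in>?A. \<forall>j\<in>?A. i \<le> j \<longrightarrow> m (\<tau> j) \<le> m (\<tau> i) \<and> 1/(P*g(\<sigma> i)) \<le> 1/(P*g(\<sigma> j))"
    proof (intro ballI impI conjI)
      fix i j assume ij: "i\<in>?A" "j\<in>?A" "i \<le> j"
      show "m (\<tau> j) \<le> m (\<tau> i)" using \<tau> ij by (auto simp: decreasing_ranking_def)
      have "g (\<sigma> j) \<le> g (\<sigma> i)" using \<sigma> ij by (auto simp: decreasing_ranking_def)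
      then have le: "P * g (\<sigma> j) \<le> P * g (\<sigma> i)" using P by simp
      have "\<sigma> j \<in> ?A" using sb ij(2) by (auto simp: bij_betw_def)
      then have "g (\<sigma> j) > 0" using gpos by auto
      then have pos: "0 < P * g (\<sigma> j)" using P by simp
      show "1/(P*g(\<sigma> i)) \<le> 1/(P*g(\<sigma> j))"
        using le pos by (simp add: frac_le)
    qed
  qed
  also have "\<dots> = (\<Sum>i=1..M. m (\<tau> i) * (1/(P*g (q (\<tau> i)))))"
  proof (rule sum.cong[OF refl])
    fix i assume "i \<in> ?A"
    then have "\<tau> i \<in> ?A" using bij_betwE[OF tb] by blast
    then have "q (\<tau> i) \<in> ?A" using bij_betwE[OF q] by blast
    then show "m (\<tau> i) * (1/(P*g (\<sigma> (f i)))) = m (\<tau> i) * (1/(P*g (q (\<tau> i))))"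
      by (simp add: f_def si)
  qed
  also have "\<dots> = (\<Sum>n=1..M. m n * (1/(P*g (q n))))"
    by (rule sum.reindex_bij_betw[OF tb, of "\<lambda>n. m n * (1/(P*g (q n)))"])
  finally show ?thesis by simp
qed



theorem theorem1:
  fixes M :: nat and PS PR c :: real and g1 g2 :: "nat \<Rightarrow> real"
  assumes "M \<ge> 1" and "PS > 0" and "PR > 0" and "c > 0"
    and "\<forall>n\<in>{1..M}. g1 n > 0" and "\<forall>n\<in>{1..M}. g2 n > 0"
  shows "\<exists>\<theta> \<mu> \<mu>b. optimal M c PS PR g1 g2 \<theta> \<mu> \<mu>b \<and> sorted_pairing M g1 g2 \<theta>"
proof -
  let ?A = "{1..M}"
  have fin: "finite ?A" by simp
  have PS: "PS > 0" and PR: "PR > 0" and g1p: "\<forall>n\<in>?A. g1 n > 0" and g2p: "\<forall>n\<in>?A. g2 n > 0"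
    using assms by auto
  obtain \<sigma>1 where s1: "decreasing_ranking M g1 \<sigma>1" using ranking_exists by blast
  obtain \<sigma>2 where s2: "decreasing_ranking M g2 \<sigma>2" using ranking_exists by blast
  have b1: "bij_betw \<sigma>1 ?A ?A" and b2: "bij_betw \<sigma>2 ?A ?A"
    using s1 s2 by (auto simp: decreasing_ranking_def)
  define \<iota>1 where "\<iota>1 = inv_into ?A \<sigma>1"
  define \<iota>2 where "\<iota>2 = inv_into ?A \<sigma>2"
  have ib1: "bij_betw \<iota>1 ?A ?A" unfolding \<iota>1_def by (rule bij_betw_inv_into[OF b1])
  have ib2: "bij_betw \<iota>2 ?A ?A" unfolding \<iota>2_def by (rule bij_betw_inv_into[OF b2])
  have is1: "\<iota>1 (\<sigma>1 i) = i" if "i \<in> ?A" for i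
    unfolding \<iota>1_def using b1 that by (simp add: bij_betw_inv_into_left)
  have is2: "\<iota>2 (\<sigma>2 i) = i" if "i \<in> ?A" for i
    unfolding \<iota>2_def using b2 that by (simp add: bij_betw_inv_into_left)
  have i1A: "\<iota>1 n \<in> ?A" if "n \<in> ?A" for n using bij_betwE[OF ib1] that by blast
  have i2A: "\<iota>2 n \<in> ?A" if "n \<in> ?A" for n using bij_betwE[OF ib2] that by blast
  define p where "p = \<sigma>2 \<circ> \<iota>1"
  have pb: "bij_betw p ?A ?A" unfolding p_def by (rule bij_betw_trans[OF ib1 b2])
  have pA: "\<forall>n\<in>?A. p n \<in> ?A" using bij_betwE[OF pb] .
  define \<theta>0 where "\<theta>0 n n' = (if n' = p n then 1 else (0::real))" for n n'
  have th0: "\<forall>n\<in>?A. \<forall>n'\<in>?A. \<theta>0 n n' = (if n' = p n then 1 else 0)" by (simp add: \<theta>0_def)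
  have "\<forall>i\<in>?A. \<theta>0 (\<sigma>1 i) (\<sigma>2 i) = 1" by (simp add: \<theta>0_def p_def is1)
  then have sp: "sorted_pairing M g1 g2 \<theta>0"
    unfolding sorted_pairing_def using s1 s2 by blast
  define F where "F = (\<lambda>q. objective M c PS PR g1 g2 \<theta>0 (fst q) (snd q))"
  have cont: "continuous_on (Sb M \<times> Sb M) F"
    unfolding F_def by (rule cont_obj[OF PS PR g1p g2p])
  have ne: "((\<lambda>_. 0), (\<lambda>_. 0)) \<in> Sb M \<times> Sb M" by (simp add: Sb_iff)
  obtain q where qS: "q \<in> Sb M \<times> Sb M" and qmax: "\<forall>y\<in>Sb M \<times> Sb M. F y \<le> F q"
    using continuous_attains_sup[OF compact_Times[OF compact_Sb compact_Sb] _ cont] ne by blast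
  define \<mu>s where "\<mu>s = fst q"
  define \<mu>bs where "\<mu>bs = snd q"
  have feas0: "feasible M \<theta>0 \<mu>s \<mu>bs"
    using qS theta_of_perm[OF fin pb] unfolding feasible_def \<mu>s_def \<mu>bs_def
    by (auto simp: Sb_iff mem_Times_iff \<theta>0_def)
  have opt: "optimal M c PS PR g1 g2 \<theta>0 \<mu>s \<mu>bs"
    unfolding optimal_def
  proof (intro conjI allI impI feas0)
    fix \<theta>' \<mu>' \<mu>b' assume fe: "feasible M \<theta>' \<mu>' \<mu>b'"
    then have s\<mu>: "(\<Sum>n=1..M. \<mu>' n) \<le> 1" and s\<mu>b: "(\<Sum>n=1..M. \<mu>b' n) \<le> 1"
      and p\<mu>: "\<forall>n\<in>?A. 0 \<le> \<mu>' n" and p\<mu>b: "\<forall>n\<in>?A. 0 \<le> \<mu>b' n"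
      and v: "\<forall>n\<in>?A. \<forall>n'\<in>?A. \<theta>' n n' \<in> {0, 1}"
      and col: "\<forall>n'\<in>?A. (\<Sum>n\<in>?A. \<theta>' n n') = 1" and row: "\<forall>n\<in>?A. (\<Sum>n'\<in>?A. \<theta>' n n') = 1"
      unfolding feasible_def by auto
    obtain \<pi> where pib: "bij_betw \<pi> ?A ?A" and pit: "\<forall>n\<in>?A. \<forall>n'\<in>?A. \<theta>' n n' = (if n' = \<pi> n then 1 else 0)"
      using perm_of_theta[OF fin v col row] by blast
    have piA: "\<forall>n\<in>?A. \<pi> n \<in> ?A" using bij_betwE[OF pib] .
    have o1: "objective M c PS PR g1 g2 \<theta>' \<mu>' \<mu>b' =
        (\<Sum>n=1..M. pair_rate c PS PR (g1 n) (g2 (\<pi> n)) (\<mu>' n) (\<mu>b' (\<pi> n)))"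
      by (rule obj_perm[OF pit piA])
    define m where "m n = min (PS * \<mu>' n * g1 n) (PR * \<mu>b' (\<pi> n) * g2 (\<pi> n))" for n
    have m0: "0 \<le> m n" if "n \<in> ?A" for n
    proof -
      have a: "0 \<le> \<mu>' n" "0 < g1 n" "0 \<le> \<mu>b' (\<pi> n)" "0 < g2 (\<pi> n)"
        using that piA p\<mu> p\<mu>b g1p g2p by auto
      then show ?thesis unfolding m_def using PS PR by simp
    qed
    have mle1: "m n / (PS * g1 n) \<le> \<mu>' n" if "n \<in> ?A" for n
    proof -
      have "0 < PS * g1 n" using PS g1p that by simp
      moreover have "m n \<le> \<mu>' n * (PS * g1 n)" unfolding m_def by (simp add: algebra_simps)
      ultimately show ?thesis by (simp add: divide_le_eq)
    qed
    have mle2: "m n / (PR * g2 (\<pi> n)) \<le> \<mu>b' (\<pi> n)" if "n \<in> ?A" for n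
    proof -
      have "0 < PR * g2 (\<pi> n)" using PR g2p piA that by simp
      moreover have "m n \<le> \<mu>b' (\<pi> n) * (PR * g2 (\<pi> n))" unfolding m_def by (simp add: algebra_simps)
      ultimately show ?thesis by (simp add: divide_le_eq)
    qed
    have pr1: "pair_rate c PS PR (g1 n) (g2 (\<pi> n)) (\<mu>' n) (\<mu>b' (\<pi> n)) = c * log 2 (1 + m n)"
      if "n \<in> ?A" for n
    proof -
      have a: "0 \<le> \<mu>' n" "0 < g1 n" "0 \<le> \<mu>b' (\<pi> n)" "0 < g2 (\<pi> n)"
        using that piA p\<mu> p\<mu>b g1p g2p by auto
      then have "0 \<le> PS * \<mu>' n * g1 n" "0 \<le> PR * \<mu>b' (\<pi> n) * g2 (\<pi> n)" using PS PR by simp_all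
      then show ?thesis unfolding pair_rate_def m_def by (rule pr_min)
    qed
    obtain \<tau> where tr: "decreasing_ranking M m \<tau>" using ranking_exists by blast
    have tb: "bij_betw \<tau> ?A ?A" using tr by (auto simp: decreasing_ranking_def)
    have tA: "\<tau> n \<in> ?A" if "n \<in> ?A" for n using bij_betwE[OF tb] that by blast
    define \<mu>'' where "\<mu>'' n = (if n \<in> ?A then m (\<tau> (\<iota>1 n)) / (PS * g1 n) else 0)" for n
    define \<mu>b'' where "\<mu>b'' n = (if n \<in> ?A then m (\<tau> (\<iota>2 n)) / (PR * g2 n) else 0)" for n
    have nn1: "0 \<le> \<mu>'' n" for n
    proof (cases "n \<in> ?A")
      case True
      then have "0 \<le> m (\<tau> (\<iota>1 n))" "0 < g1 n" using m0[OF tA[OF i1A]] g1p by auto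
      then show ?thesis using True PS unfolding \<mu>''_def by simp
    next
      case False then show ?thesis unfolding \<mu>''_def by (simp only: if_False order_refl)
    qed
    have nn2: "0 \<le> \<mu>b'' n" for n
    proof (cases "n \<in> ?A")
      case True
      then have "0 \<le> m (\<tau> (\<iota>2 n))" "0 < g2 n" using m0[OF tA[OF i2A]] g2p by auto
      then show ?thesis using True PR unfolding \<mu>b''_def by simp
    next
      case False then show ?thesis unfolding \<mu>b''_def by (simp only: if_False order_refl)
    qed
    have "(\<Sum>n=1..M. \<mu>'' n) = (\<Sum>n=1..M. m (\<tau> (\<iota>1 n)) / (PS * g1 n))"
      by (rule sum.cong) (auto simp: \<mu>''_def)
    also have "\<dots> = (\<Sum>i=1..M. m (\<tau> (\<iota>1 (\<sigma>1 i))) / (PS * g1 (\<sigma>1 i)))"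
      by (rule sum.reindex_bij_betw[OF b1, symmetric])
    also have "\<dots> = (\<Sum>i=1..M. m (\<tau> i) / (PS * g1 (\<sigma>1 i)))"
      by (rule sum.cong) (auto simp: is1)
    also have "\<dots> \<le> (\<Sum>n=1..M. m n / (PS * g1 ((\<lambda>n. n) n)))"
      by (rule hop_bound[OF s1 tr _ PS g1p]) (simp add: bij_betw_def)
    also have "\<dots> \<le> (\<Sum>n=1..M. \<mu>' n)" by (rule sum_mono) (simp add: mle1)
    also have "\<dots> \<le> 1" by (rule s\<mu>)
    finally have sum1: "(\<Sum>n=1..M. \<mu>'' n) \<le> 1" .
    have "(\<Sum>n=1..M. \<mu>b'' n) = (\<Sum>n=1..M. m (\<tau> (\<iota>2 n)) / (PR * g2 n))"
      by (rule sum.cong) (auto simp: \<mu>b''_def)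
    also have "\<dots> = (\<Sum>i=1..M. m (\<tau> (\<iota>2 (\<sigma>2 i))) / (PR * g2 (\<sigma>2 i)))"
      by (rule sum.reindex_bij_betw[OF b2, symmetric])
    also have "\<dots> = (\<Sum>i=1..M. m (\<tau> i) / (PR * g2 (\<sigma>2 i)))"
      by (rule sum.cong) (auto simp: is2)
    also have "\<dots> \<le> (\<Sum>n=1..M. m n / (PR * g2 (\<pi> n)))"
      by (rule hop_bound[OF s2 tr pib PR g2p])
    also have "\<dots> \<le> (\<Sum>n=1..M. \<mu>b' (\<pi> n))" by (rule sum_mono) (simp add: mle2)
    also have "\<dots> = (\<Sum>n=1..M. \<mu>b' n)" by (rule sum.reindex_bij_betw[OF pib])
    also have "\<dots> \<le> 1" by (rule s\<mu>b)
    finally have sum2: "(\<Sum>n=1..M. \<mu>b'' n) \<le> 1" .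
    have le1: "\<mu>'' n \<le> 1" if "n \<in> ?A" for n
      using member_le_sum[of n ?A \<mu>''] that nn1 sum1 by auto
    have le2: "\<mu>b'' n \<le> 1" if "n \<in> ?A" for n
      using member_le_sum[of n ?A \<mu>b''] that nn2 sum2 by auto
    have inS: "(\<mu>'', \<mu>b'') \<in> Sb M \<times> Sb M"
    proof -
      have z1: "\<forall>n. n \<notin> ?A \<longrightarrow> \<mu>'' n = 0" by (simp add: \<mu>''_def)
      have z2: "\<forall>n. n \<notin> ?A \<longrightarrow> \<mu>b'' n = 0" by (simp add: \<mu>b''_def)
      show ?thesis unfolding mem_Times_iff fst_conv snd_conv Sb_iff
        using nn1 nn2 le1 le2 sum1 sum2 z1 z2 by blast
    qed
    have o2: "objective M c PS PR g1 g2 \<theta>0 \<mu>'' \<mu>b'' =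
        (\<Sum>n=1..M. pair_rate c PS PR (g1 n) (g2 (p n)) (\<mu>'' n) (\<mu>b'' (p n)))"
      by (rule obj_perm[OF th0 pA])
    also have "\<dots> = (\<Sum>n=1..M. c * log 2 (1 + m (\<tau> (\<iota>1 n))))"
    proof (rule sum.cong[OF refl])
      fix n assume n: "n \<in> ?A"
      have pn: "p n \<in> ?A" using pA n by blast
      have ip: "\<iota>2 (p n) = \<iota>1 n" unfolding p_def using is2[OF i1A[OF n]] by simp
      have e1: "PS * \<mu>'' n * g1 n = m (\<tau> (\<iota>1 n))"
      proof -
        have "g1 n > 0" using n g1p by auto
        then show ?thesis using n PS unfolding \<mu>''_def by simp
      qed
      have e2: "PR * \<mu>b'' (p n) * g2 (p n) = m (\<tau> (\<iota>1 n))"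
      proof -
        have "g2 (p n) > 0" using pn g2p by auto
        then show ?thesis using pn PR ip unfolding \<mu>b''_def by simp
      qed
      show "pair_rate c PS PR (g1 n) (g2 (p n)) (\<mu>'' n) (\<mu>b'' (p n)) = c * log 2 (1 + m (\<tau> (\<iota>1 n)))"
        unfolding pair_rate_def e1 e2 by simp
    qed
    also have "\<dots> = (\<Sum>n=1..M. c * log 2 (1 + m n))"
      using sum.reindex_bij_betw[OF bij_betw_trans[OF ib1 tb], of "\<lambda>n. c * log 2 (1 + m n)"]
      by simp
    also have "\<dots> = objective M c PS PR g1 g2 \<theta>' \<mu>' \<mu>b'"
      unfolding o1 by (rule sum.cong) (simp_all add: pr1)
    finally have "objective M c PS PR g1 g2 \<theta>' \<mu>' \<mu>b' = F (\<mu>'', \<mu>b'')" by (simp add: F_def)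
    also have "\<dots> \<le> F q" using qmax inS by blast
    also have "\<dots> = objective M c PS PR g1 g2 \<theta>0 \<mu>s \<mu>bs" by (simp add: F_def \<mu>s_def \<mu>bs_def)
    finally show "objective M c PS PR g1 g2 \<theta>' \<mu>' \<mu>b' \<le> objective M c PS PR g1 g2 \<theta>0 \<mu>s \<mu>bs" .
  qed
  show ?thesis using opt sp by blast
qed

end
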